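(* For integers $j\ge 2$ let \[ I(j)=\left\lfloor \frac{1}{1+\sum_{k=2}^{j-1}\left\lfloor \frac{\gcd(k,j)}{k}\right\rfloor}\right\rfloor,\qquad S(i)=\sum_{j=2}^{i} I(j)\ (i\ge 1), \] and for integers $i\ge 1$, $x\ge 0$ let $A(i,x)=\left\lfloor \frac{1}{1+\lfloor S(i)/(x+1)\rfloor}\right\rfloor$. Then for all integers $x\ge 0$ and $i\ge 1$, $A(i,x)=1$ if $\pi(i)\le x$ and $A(i,x)=0$ otherwise.
   Context: $\pi(i)$ is the prime counting function. $\lfloor\cdot\rfloor$ is the floor function; empty sums are $0$. *)

theory Defs
  imports Complex_Main "HOL-Computational_Algebra.Primes"
begin

definition prime_pi :: "int \<Rightarrow> nat" where
  "prime_pi i = card {p :: nat. prime p \<and> int p \<le> i}"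

definition I_fun :: "int \<Rightarrow> int" where
  "I_fun j = \<lfloor>1 / (1 + real_of_int (\<Sum>k\<in>{2..j-1}. \<lfloor>real_of_int (gcd k j) / real_of_int k\<rfloor>))\<rfloor>"

definition S_fun :: "int \<Rightarrow> int" where
  "S_fun i = (\<Sum>j\<in>{2..i}. I_fun j)"

definition A_fun :: "int \<Rightarrow> int \<Rightarrow> int" where
  "A_fun i x = \<lfloor>1 / (1 + real_of_int \<lfloor>real_of_int (S_fun i) / real_of_int (x + 1)\<rfloor>)\<rfloor>"

end

theory Submission
  imports Defs
begin

lemma floor_gcd_term:
  fixes k j :: int
  assumes "k \<ge> 2" "j \<ge> 2"
  shows "\<lfloor>real_of_int (gcd k j) / real_of_int k\<rfloor> = (if k dvd j then 1 else 0)"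
proof (cases "k dvd j")
  case True
  then have "gcd k j = k" using assms by (simp add: gcd_proj1_iff)
  then show ?thesis using True assms by simp
next
  case False
  have g1: "gcd k j \<le> k" using assms by simp
  have "gcd k j \<noteq> k" using False by (metis gcd_dvd2)
  then have g2: "gcd k j < k" using g1 by simp
  have g0: "gcd k j \<ge> 0" by simp
  have "real_of_int (gcd k j) / real_of_int k < 1" using g2 assms by simp
  moreover have "real_of_int (gcd k j) / real_of_int k \<ge> 0" using g0 assms by simp
  ultimately show ?thesis using False by (simp add: floor_eq_iff)
qed

lemma I_prime:
  fixes j :: int
  assumes "j \<ge> 2"
  shows "I_fun j = (if prime j then 1 else 0)"
proof -
  have s: "(\<Sum>k\<in>{2..j-1}. \<lfloor>real_of_int (gcd k j) / real_of_int k\<rfloor>)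
        = (\<Sum>k\<in>{2..j-1}. (if k dvd j then 1 else 0))"
    using assms by (intro sum.cong) (auto simp: floor_gcd_term)
  have "(\<Sum>k\<in>{2..j-1}. (if k dvd j then 1 else 0)) = int (card {k\<in>{2..j-1}. k dvd j})"
    by (simp add: sum.If_cases; rule arg_cong[where f=card]; auto)
  then have s2: "(\<Sum>k\<in>{2..j-1}. \<lfloor>real_of_int (gcd k j) / real_of_int k\<rfloor>) = int (card {k\<in>{2..j-1}. k dvd j})"
    using s by simp
  have pr: "prime j \<longleftrightarrow> {k\<in>{2..j-1}. k dvd j} = {}"
    using assms by (auto simp: prime_int_iff')
  show ?thesis
  proof (cases "prime j")
    case True
    then have e: "{k\<in>{2..j-1}. k dvd j} = {}" using pr by simp
    have "(\<Sum>k\<in>{2..j-1}. \<lfloor>real_of_int (gcd k j) / real_of_int k\<rfloor>) = 0"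
      unfolding s2 e by simp
    then show ?thesis using True by (simp add: I_fun_def)
  next
    case False
    then have "{k\<in>{2..j-1}. k dvd j} \<noteq> {}" using pr by simp
    moreover have "finite {k\<in>{2..j-1}. k dvd j}" by (rule finite_subset[of _ "{2..j-1}"]) auto
    ultimately have "card {k\<in>{2..j-1}. k dvd j} > 0" by (simp only: card_gt_0_iff) simp
    then have "card {k\<in>{2..j-1}. k dvd j} \<ge> 1" by simp
    then have "real (card {k\<in>{2..j-1}. k dvd j}) \<ge> 1" by simp
    then have "\<lfloor>1 / (1 + real (card {k\<in>{2..j-1}. k dvd j}))\<rfloor> = 0"
      by (simp add: floor_eq_iff)
    then show ?thesis using False s2 by (simp add: I_fun_def)
  qed
qed

lemma S_pi:
  fixes i :: int
  shows "S_fun i = int (prime_pi i)"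
proof -
  have "S_fun i = (\<Sum>j\<in>{2..i}. (if prime j then 1 else 0))"
    unfolding S_fun_def by (intro sum.cong) (auto simp: I_prime)
  also have "\<dots> = int (card {j\<in>{2..i}. prime j})"
    by (simp add: sum.If_cases; rule arg_cong[where f=card]; auto)
  also have "{j\<in>{2..i}. prime j} = int ` {p :: nat. prime p \<and> int p \<le> i}"
  proof (intro set_eqI iffI)
    fix j assume "j \<in> {j\<in>{2..i}. prime j}"
    then have "j = int (nat j)" "prime (nat j)" "int (nat j) \<le> i" by auto
    then show "j \<in> int ` {p :: nat. prime p \<and> int p \<le> i}" by blast
  next
    fix j assume "j \<in> int ` {p :: nat. prime p \<and> int p \<le> i}"
    then obtain p :: nat where "j = int p" "prime p" "int p \<le> i" by auto
    moreover have "p \<ge> 2" using \<open>prime p\<close> prime_ge_2_nat by blast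
    ultimately show "j \<in> {j\<in>{2..i}. prime j}" by auto
  qed
  also have "card (int ` {p :: nat. prime p \<and> int p \<le> i}) = card {p :: nat. prime p \<and> int p \<le> i}"
    by (simp add: card_image)
  finally show ?thesis by (simp add: prime_pi_def)
qed

theorem mainTheorem3:
  fixes i x :: int
  assumes "x \<ge> 0" and "i \<ge> 1"
  shows "A_fun i x = (if int (prime_pi i) \<le> x then 1 else 0)"
proof -
  define s where "s = int (prime_pi i)"
  have s0: "s \<ge> 0" by (simp add: s_def)
  have xp: "real_of_int (x + 1) > 0" using assms by simp
  have A: "A_fun i x = \<lfloor>1 / (1 + real_of_int \<lfloor>real_of_int s / real_of_int (x + 1)\<rfloor>)\<rfloor>"
    by (simp add: A_fun_def S_pi s_def)
  show ?thesis
  proof (cases "s \<le> x")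
    case True
    have "real_of_int s / real_of_int (x + 1) < 1" using True xp by (simp add: divide_less_eq)
    moreover have "real_of_int s / real_of_int (x + 1) \<ge> 0" using s0 xp by simp
    ultimately have "\<lfloor>real_of_int s / real_of_int (x + 1)\<rfloor> = 0" by (simp add: floor_eq_iff)
    then show ?thesis using A True s_def by simp
  next
    case False
    have "real_of_int s / real_of_int (x + 1) \<ge> 1" using False xp by (simp add: le_divide_eq)
    then have q: "\<lfloor>real_of_int s / real_of_int (x + 1)\<rfloor> \<ge> 1" by (simp add: le_floor_iff)
    then have "real_of_int \<lfloor>real_of_int s / real_of_int (x + 1)\<rfloor> \<ge> 1" by linarith
    then have "\<lfloor>1 / (1 + real_of_int \<lfloor>real_of_int s / real_of_int (x + 1)\<rfloor>)\<rfloor> = 0"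
    proof -
      have g: "\<And>t::real. t \<ge> 1 \<Longrightarrow> \<lfloor>1 / (1 + t)\<rfloor> = 0"
        by (subst floor_eq_iff) (auto simp: divide_less_eq)
      show ?thesis by (rule g) fact
    qed
    then show ?thesis using A False s_def by simp
  qed
qed

end
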